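(* Fix a uniformity $r\ge2$ and a residue $k$ modulo $r$. Let $\mathrm{cyc}=(1\,2\,\cdots\,r)\in S_r$ and $\pi=\mathrm{cyc}^k$. An $r$-graph $G$ is $\mathscr C_k^{(r)}$-hom-free if and only if there is an accordant $A_\pi$-coloring $\chi:\vec E(G)\to A_\pi$.
   Context: An $r$-graph is an $r$-uniform hypergraph. For $\ell>r$, the tight cycle $C_\ell^{(r)}$ has vertices $v_1,\dots,v_\ell$ and edges $\{v_i,\dots,v_{i+r-1}\}$, $1\le i\le \ell$, indices mod $\ell$. A homomorphism $F\to G$ is a map $\phi:V(F)\to V(G)$ sending each edge of $F$ onto an edge of $G$ (images of an edge's vertices are distinct). $G$ is $\mathscr C_k^{(r)}$-hom-free if there is no homomorphism $C_\ell^{(r)}\to G$ for any $\ell>r$ with $\ell\equiv k\pmod r$. An oriented edge of $G$ is an ordered $r$-tuple $x_1\cdots x_r$ of vertices whose underlying set $\{x_1,\dots,x_r\}$ is an edge of $G$; $\vec E(G)$ is the set of oriented edges, with $S_r$-action $\sigma(x_1\cdots x_r)=x_{\sigma^{-1}(1)}\cdots x_{\sigma^{-1}(r)}$. For an $S_r$-set $A$, an $A$-coloring of $\vec E(G)$ is an $S_r$-equivariant map $\chi:\vec E(G)\to A$ (i.e. $\chi(\sigma(\mathbf x))=\sigma(\chi(\mathbf x))$); it is accordant if $\chi(\mathbf x)=\chi(\mathbf x')$ whenever $\mathbf x,\mathbf x'\in\vec E(G)$ differ in exactly one coordinate. A subgroup of $S_r$ avoids $\pi$ if it contains no conjugate of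 $\pi$. Let $\mathfrak G_\pi$ be the set of maximal $\pi$-avoiding subgroups of $S_r$, and write $\mathfrak G_\pi$ as the disjoint union of the conjugacy classes of subgroups $\Gamma_1,\dots,\Gamma_m$. Then $A_\pi=\bigsqcup_{i=1}^m S_r/\Gamma_i$, the disjoint union of the sets of left cosets, with $S_r$ acting by left multiplication. *)

theory Defs
  imports "HOL-Algebra.Sym_Groups" "HOL-Algebra.Coset"
begin

type_synonym perm = "nat \<Rightarrow> nat"

definition cyc :: "nat \<Rightarrow> perm" where
  "cyc r i = (if 1 \<le> i \<and> i < r then i + 1 else if i = r then 1 else i)"

text \<open>Tight cycle homomorphisms: phi maps vertex i (0..l-1) of C_l; edge i is {i,...,i+r-1} mod l.\<close>
definition cycle_hom :: "nat \<Rightarrow> 'a set set \<Rightarrow> nat \<Rightarrow> (nat \<Rightarrow> 'a) \<Rightarrow> bool" where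
  "cycle_hom r E l phi \<longleftrightarrow>
     (\<forall>i<l. distinct (map (\<lambda>j. phi ((i + j) mod l)) [0..<r])
            \<and> set (map (\<lambda>j. phi ((i + j) mod l)) [0..<r]) \<in> E)"

definition hom_free :: "nat \<Rightarrow> nat \<Rightarrow> 'a set set \<Rightarrow> bool" where
  "hom_free r k E \<longleftrightarrow> \<not> (\<exists>l phi. l > r \<and> l mod r = k mod r \<and> cycle_hom r E l phi)"

definition avoids :: "nat \<Rightarrow> perm \<Rightarrow> perm set \<Rightarrow> bool" where
  "avoids r p H \<longleftrightarrow>
     (\<forall>g \<in> carrier (sym_group r). g \<otimes>\<^bsub>sym_group r\<^esub> p \<otimes>\<^bsub>sym_group r\<^esub> inv\<^bsub>sym_group r\<^esub> g \<notin> H)"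

definition max_avoiding :: "nat \<Rightarrow> perm \<Rightarrow> perm set \<Rightarrow> bool" where
  "max_avoiding r p H \<longleftrightarrow> subgroup H (sym_group r) \<and> avoids r p H \<and>
     (\<forall>H'. subgroup H' (sym_group r) \<and> avoids r p H' \<and> H \<subseteq> H' \<longrightarrow> H' = H)"

definition conj_subgroups :: "nat \<Rightarrow> perm set \<Rightarrow> perm set \<Rightarrow> bool" where
  "conj_subgroups r H H' \<longleftrightarrow> (\<exists>g \<in> carrier (sym_group r).
     H' = (g <#\<^bsub>sym_group r\<^esub> H) #>\<^bsub>sym_group r\<^esub> inv\<^bsub>sym_group r\<^esub> g)"

definition rep_system :: "nat \<Rightarrow> perm \<Rightarrow> perm set set \<Rightarrow> bool" where
  "rep_system r p R \<longleftrightarrow> R \<subseteq> {H. max_avoiding r p H} \<and>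
     (\<forall>H. max_avoiding r p H \<longrightarrow> (\<exists>!G. G \<in> R \<and> conj_subgroups r G H))"

text \<open>A_p = disjoint union over Gamma in R of the left cosets S_r/Gamma; element = (Gamma, coset).\<close>
definition A_set :: "nat \<Rightarrow> perm set set \<Rightarrow> (perm set \<times> perm set) set" where
  "A_set r R = {(G, C). G \<in> R \<and> (\<exists>g \<in> carrier (sym_group r). C = g <#\<^bsub>sym_group r\<^esub> G)}"

definition A_act :: "nat \<Rightarrow> perm \<Rightarrow> perm set \<times> perm set \<Rightarrow> perm set \<times> perm set" where
  "A_act r s a = (fst a, s <#\<^bsub>sym_group r\<^esub> snd a)"

text \<open>Oriented edges: lists x_1...x_r (stored 0-indexed) of distinct vertices forming an edge.\<close>
definition oedges :: "nat \<Rightarrow> 'a set set \<Rightarrow> 'a list set" where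
  "oedges r E = {xs. length xs = r \<and> distinct xs \<and> set xs \<in> E}"

text \<open>sigma(x_1...x_r) = x_{sigma^-1(1)} ... x_{sigma^-1(r)}\<close>
definition tuple_act :: "nat \<Rightarrow> perm \<Rightarrow> 'a list \<Rightarrow> 'a list" where
  "tuple_act r s xs = map (\<lambda>j. xs ! (inv' s (Suc j) - 1)) [0..<r]"

definition A_coloring :: "nat \<Rightarrow> perm set set \<Rightarrow> 'a set set \<Rightarrow> ('a list \<Rightarrow> perm set \<times> perm set) \<Rightarrow> bool" where
  "A_coloring r R E chi \<longleftrightarrow>
     (\<forall>xs \<in> oedges r E. chi xs \<in> A_set r R) \<and>
     (\<forall>s \<in> carrier (sym_group r). \<forall>xs \<in> oedges r E. chi (tuple_act r s xs) = A_act r s (chi xs))"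

definition accordant :: "nat \<Rightarrow> 'a set set \<Rightarrow> ('a list \<Rightarrow> 'b) \<Rightarrow> bool" where
  "accordant r E chi \<longleftrightarrow> (\<forall>xs \<in> oedges r E. \<forall>ys \<in> oedges r E.
     card {i. i < r \<and> xs ! i \<noteq> ys ! i} = 1 \<longrightarrow> chi xs = chi ys)"

end

theory Submission
  imports Defs
begin

definition win :: "nat \<Rightarrow> (nat \<Rightarrow> 'a) \<Rightarrow> nat \<Rightarrow> 'a list" where
  "win r f i = map (\<lambda>j. f (i + j)) [0..<r]"

definition reidx :: "nat \<Rightarrow> (nat \<Rightarrow> nat) \<Rightarrow> 'a list \<Rightarrow> 'a list" where
  "reidx r b xs = map (\<lambda>j. xs ! b j) [0..<r]"

definition rotn :: "nat \<Rightarrow> nat \<Rightarrow> 'a list \<Rightarrow> 'a list" where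
  "rotn r m xs = reidx r (\<lambda>j. (m + j) mod r) xs"

definition adj :: "nat \<Rightarrow> 'a set set \<Rightarrow> 'a list \<Rightarrow> 'a list \<Rightarrow> bool" where
  "adj r E x y \<longleftrightarrow> x \<in> oedges r E \<and> y \<in> oedges r E \<and> card {i. i < r \<and> x ! i \<noteq> y ! i} = 1"

definition twalk :: "nat \<Rightarrow> 'a set set \<Rightarrow> nat \<Rightarrow> 'a list \<Rightarrow> 'a list \<Rightarrow> bool" where
  "twalk r E m x y \<longleftrightarrow> (\<exists>f. (\<forall>i\<le>m. win r f i \<in> oedges r E) \<and> win r f 0 = x \<and> win r f m = y)"

lemma reidx_oedges:
  assumes b: "bij_betw b {..<r} {..<r}" and x: "x \<in> oedges r E"
  shows "reidx r b x \<in> oedges r E"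
proof -
  have len: "length x = r" and d: "distinct x" and s: "set x \<in> E" using x by (auto simp: oedges_def)
  have bi: "b i < r" if "i < r" for i using b that by (auto simp: bij_betw_def)
  have "set (reidx r b x) = (\<lambda>j. x ! j) ` (b ` {..<r})"
    by (auto simp: reidx_def image_image)
  also have "\<dots> = set x"
  proof -
    have "b ` {..<r} = {..<r}" using b by (simp add: bij_betw_def)
    then show ?thesis using len by (auto simp: set_conv_nth)
  qed
  finally have 1: "set (reidx r b x) = set x" .
  have "inj_on (\<lambda>j. x ! b j) {0..<r}"
  proof (rule inj_onI)
    fix i j assume "i \<in> {0..<r}" "j \<in> {0..<r}" "x ! b i = x ! b j"
    then have "b i = b j" using d len bi by (simp add: nth_eq_iff_index_eq)
    then show "i = j" using b \<open>i \<in> {0..<r}\<close> \<open>j \<in> {0..<r}\<close> by (auto simp: bij_betw_def inj_on_def)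
  qed
  then have "distinct (reidx r b x)" by (simp add: reidx_def distinct_map)
  then show ?thesis using 1 s by (simp add: oedges_def reidx_def)
qed

lemma reidx_adj:
  assumes b: "bij_betw b {..<r} {..<r}" and a: "adj r E x y"
  shows "adj r E (reidx r b x) (reidx r b y)"
proof -
  have "{i. i < r \<and> x ! i \<noteq> y ! i} = b ` {i. i < r \<and> reidx r b x ! i \<noteq> reidx r b y ! i}"
  proof -
    have "b ` {i. i < r \<and> reidx r b x ! i \<noteq> reidx r b y ! i} = b ` {i. i < r \<and> x ! b i \<noteq> y ! b i}"
      by (auto simp: reidx_def)
    also have "\<dots> = {i. i < r \<and> x ! i \<noteq> y ! i}"
    proof
      show "b ` {i. i < r \<and> x ! b i \<noteq> y ! b i} \<subseteq> {i. i < r \<and> x ! i \<noteq> y ! i}"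
        using b by (auto simp: bij_betw_def)
      show "{i. i < r \<and> x ! i \<noteq> y ! i} \<subseteq> b ` {i. i < r \<and> x ! b i \<noteq> y ! b i}"
      proof
        fix i assume iin: "i \<in> {i. i < r \<and> x ! i \<noteq> y ! i}"
        then have "i \<in> b ` {..<r}" using b by (simp add: bij_betw_def)
        then obtain j where "j < r" "b j = i" by auto
        then show "i \<in> b ` {i. i < r \<and> x ! b i \<noteq> y ! b i}" using iin by auto
      qed
    qed
    finally show ?thesis by simp
  qed
  moreover have "inj_on b {i. i < r \<and> reidx r b x ! i \<noteq> reidx r b y ! i}"
    using b by (auto simp: bij_betw_def inj_on_def)
  ultimately have "card {i. i < r \<and> reidx r b x ! i \<noteq> reidx r b y ! i} = card {i. i < r \<and> x ! i \<noteq> y ! i}"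
    by (simp add: card_image)
  then show ?thesis using a by (simp add: adj_def reidx_oedges[OF b])
qed

lemma reidx_eqv:
  assumes b: "bij_betw b {..<r} {..<r}" and a: "(adj r E)\<^sup>*\<^sup>* x y"
  shows "(adj r E)\<^sup>*\<^sup>* (reidx r b x) (reidx r b y)"
  using a
proof (induction rule: rtranclp_induct)
  case base then show ?case by simp
next
  case (step y z) then show ?case using reidx_adj[OF b] by (meson rtranclp.rtrancl_into_rtrancl)
qed

lemma adj_sym: "adj r E x y \<Longrightarrow> adj r E y x"
proof -
  assume a: "adj r E x y"
  have "{i. i < r \<and> y ! i \<noteq> x ! i} = {i. i < r \<and> x ! i \<noteq> y ! i}" by auto
  then show ?thesis using a unfolding adj_def by simp
qed

lemma eqv_sym: "(adj r E)\<^sup>*\<^sup>* x y \<Longrightarrow> (adj r E)\<^sup>*\<^sup>* y x"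
proof (induction rule: rtranclp_induct)
  case base then show ?case by simp
next
  case (step y z) show ?case by (rule converse_rtranclp_into_rtranclp[OF adj_sym[OF step(2)] step(3)])
qed

lemma mod_cancel_aux:
  fixes i j m r :: nat
  assumes "(m + i) mod r = (m + j) mod r" "i < r" "j < r" "i \<le> j"
  shows "i = j"
proof -
  have "r dvd (m + j) - (m + i)" using assms mod_eq_dvd_iff_nat[of "m + i" "m + j" r] by simp
  then have "r dvd j - i" by simp
  moreover have "j - i < r" using assms by simp
  ultimately have "j - i = 0" using nat_dvd_not_less[of "j - i" r] by (cases "j - i = 0") auto
  then show ?thesis using assms by simp
qed

lemma mod_cancel:
  fixes i j m r :: nat
  assumes "(m + i) mod r = (m + j) mod r" "i < r" "j < r"
  shows "i = j"
proof (cases "i \<le> j")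
  case True then show ?thesis using mod_cancel_aux[OF assms True] by simp
next
  case False then show ?thesis using mod_cancel_aux[OF assms(1)[symmetric] assms(3,2)] by simp
qed

lemma rot_bij:
  fixes m r :: nat
  assumes "0 < r" shows "bij_betw (\<lambda>j. (m + j) mod r) {..<r} {..<r}"
proof -
  have inj: "inj_on (\<lambda>j. (m + j) mod r) {..<r}"
  proof (rule inj_onI)
    fix i j assume "i \<in> {..<r}" "j \<in> {..<r}" "(m + i) mod r = (m + j) mod r"
    then show "i = j" using \<open>i \<in> {..<r}\<close> \<open>j \<in> {..<r}\<close> mod_cancel[of m i r j] by simp
  qed
  moreover have img: "(\<lambda>j. (m + j) mod r) ` {..<r} \<subseteq> {..<r}" using assms by auto
  ultimately show ?thesis unfolding bij_betw_def using endo_inj_surj[OF finite_lessThan img inj] by simp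
qed

lemma act_bij:
  assumes p: "s permutes {1..r}" shows "bij_betw (\<lambda>j. inv' s (Suc j) - 1) {..<r} {..<r}"
proof -
  have pi: "inv' s permutes {1..r}" using p permutes_inv by blast
  have rng: "inv' s i \<in> {1..r}" if "i \<in> {1..r}" for i using permutes_in_image[OF pi, of i] that by simp
  have inj: "inj_on (\<lambda>j. inv' s (Suc j) - 1) {..<r}"
  proof (rule inj_onI)
    fix i j assume "i \<in> {..<r}" "j \<in> {..<r}" "inv' s (Suc i) - 1 = inv' s (Suc j) - 1"
    moreover have "inv' s (Suc i) \<in> {1..r}" "inv' s (Suc j) \<in> {1..r}" using rng \<open>i \<in> _\<close> \<open>j \<in> _\<close> by auto
    ultimately have "inv' s (Suc i) = inv' s (Suc j)" by auto
    then have "Suc i = Suc j" using permutes_inj[OF pi] by (simp add: inj_eq)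
    then show "i = j" by simp
  qed
  moreover have img: "(\<lambda>j. inv' s (Suc j) - 1) ` {..<r} \<subseteq> {..<r}"
  proof
    fix y assume "y \<in> (\<lambda>j. inv' s (Suc j) - 1) ` {..<r}"
    then obtain j where "j < r" "y = inv' s (Suc j) - 1" by auto
    moreover have "inv' s (Suc j) \<in> {1..r}" using rng \<open>j < r\<close> by auto
    ultimately show "y \<in> {..<r}" by auto
  qed
  ultimately show ?thesis unfolding bij_betw_def using endo_inj_surj[OF finite_lessThan img inj] by simp
qed

lemma act_reidx: "tuple_act r s xs = reidx r (\<lambda>j. inv' s (Suc j) - 1) xs"
  by (simp add: tuple_act_def reidx_def)

lemma act_comp:
  assumes "s permutes {1..r}" "t permutes {1..r}"
  shows "tuple_act r s (tuple_act r t x) = tuple_act r (s \<circ> t) x"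
proof -
  have pi: "inv' s permutes {1..r}" using assms permutes_inv by blast
  have ic: "inv' (s \<circ> t) = inv' t \<circ> inv' s" using assms by (simp add: o_inv_distrib permutes_bij)
  have rng: "inv' s (Suc j) \<in> {1..r}" if "j < r" for j
    using permutes_in_image[OF pi, of "Suc j"] that by auto
  show ?thesis
  proof (rule nth_equalityI)
    show "length (tuple_act r s (tuple_act r t x)) = length (tuple_act r (s \<circ> t) x)"
      by (simp add: tuple_act_def)
    fix j assume "j < length (tuple_act r s (tuple_act r t x))"
    then have j: "j < r" by (simp add: tuple_act_def)
    have b1: "inv' s (Suc j) - 1 < r" and b2: "Suc (inv' s (Suc j) - 1) = inv' s (Suc j)"
      using rng[OF j] by auto
    have "tuple_act r s (tuple_act r t x) ! j = tuple_act r t x ! (inv' s (Suc j) - 1)"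
      using j by (simp add: tuple_act_def)
    also have "\<dots> = x ! (inv' t (Suc (inv' s (Suc j) - 1)) - 1)"
      using b1 by (simp add: tuple_act_def)
    also have "\<dots> = x ! (inv' t (inv' s (Suc j)) - 1)"
      by (simp only: b2)
    also have "\<dots> = tuple_act r (s \<circ> t) x ! j"
      using j by (simp add: tuple_act_def ic)
    finally show "tuple_act r s (tuple_act r t x) ! j = tuple_act r (s \<circ> t) x ! j" .
  qed
qed

lemma act_id: "length x = r \<Longrightarrow> tuple_act r id x = x"
  unfolding tuple_act_def inv_id by (intro nth_equalityI) simp_all


lemma win_nth: "j < r \<Longrightarrow> win r f i ! j = f (i + j)"
  by (simp add: win_def)

lemma win_len[simp]: "length (win r f i) = r"
  by (simp add: win_def)

lemma rotn_nth: "j < r \<Longrightarrow> rotn r m x ! j = x ! ((m + j) mod r)"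
  by (simp add: rotn_def reidx_def)

lemma rotn_len[simp]: "length (rotn r m x) = r"
  by (simp add: rotn_def reidx_def)

lemma oedges_len: "x \<in> oedges r E \<Longrightarrow> length x = r"
  by (simp add: oedges_def)

lemma rotn_oedges: "0 < r \<Longrightarrow> x \<in> oedges r E \<Longrightarrow> rotn r m x \<in> oedges r E"
  unfolding rotn_def using reidx_oedges rot_bij by blast

lemma rotn_0: "length x = r \<Longrightarrow> rotn r 0 x = x"
  by (intro nth_equalityI) (auto simp: rotn_nth)

lemma rotn_rotn: "0 < r \<Longrightarrow> rotn r a (rotn r b x) = rotn r (b + a) x"
  by (intro nth_equalityI) (auto simp: rotn_nth mod_add_right_eq add.assoc)

lemma twalk_refl: assumes "x \<in> oedges r E" shows "twalk r E 0 x x"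
proof -
  have "win r (\<lambda>t. x ! t) 0 = x" using oedges_len[OF assms]
    by (intro nth_equalityI) (auto simp: win_nth)
  then show ?thesis unfolding twalk_def using assms by (intro exI[of _ "\<lambda>t. x ! t"]) simp
qed

lemma twalk_rot:
  assumes "0 < r" "x \<in> oedges r E" shows "twalk r E m x (rotn r m x)"
proof -
  define f where "f t = x ! (t mod r)" for t
  have w: "win r f i = rotn r i x" for i
    by (intro nth_equalityI) (auto simp: win_nth rotn_nth f_def)
  show ?thesis unfolding twalk_def
    by (rule exI[of _ f]) (simp add: w rotn_oedges assms rotn_0[OF oedges_len[OF assms(2)]])
qed

lemma twalk_trans:
  assumes "twalk r E a x y" "twalk r E b y z" shows "twalk r E (a + b) x z"
proof -
  obtain f where f: "\<forall>i\<le>a. win r f i \<in> oedges r E" "win r f 0 = x" "win r f a = y"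
    using assms(1) by (auto simp: twalk_def)
  obtain g where g: "\<forall>i\<le>b. win r g i \<in> oedges r E" "win r g 0 = y" "win r g b = z"
    using assms(2) by (auto simp: twalk_def)
  define h where "h t = (if t < a then f t else g (t - a))" for t
  have hf: "h t = f t" if "t < a + r" for t
  proof (cases "t < a")
    case False
    then have "t - a < r" using that by simp
    then have "g (t - a) = win r g 0 ! (t - a)" by (simp add: win_nth)
    also have "\<dots> = win r f a ! (t - a)" using f g by simp
    also have "\<dots> = f t" using \<open>t - a < r\<close> False by (simp add: win_nth)
    finally show ?thesis using False by (simp add: h_def)
  qed (simp add: h_def)
  have w1: "win r h i = win r f i" if "i \<le> a" for i
    using that by (intro nth_equalityI) (auto simp: win_nth hf)
  have w2: "win r h i = win r g (i - a)" if "a \<le> i" for i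
    using that by (intro nth_equalityI) (auto simp: win_nth h_def)
  have "\<forall>i\<le>a + b. win r h i \<in> oedges r E"
  proof (intro allI impI)
    fix i assume "i \<le> a + b"
    show "win r h i \<in> oedges r E"
    proof (cases "i \<le> a")
      case True then show ?thesis using w1 f by simp
    next
      case False then show ?thesis using w2[of i] g \<open>i \<le> a + b\<close> by simp
    qed
  qed
  moreover have "win r h 0 = x" using w1[of 0] f by simp
  moreover have "win r h (a + b) = z" using w2[of "a + b"] g by simp
  ultimately show ?thesis unfolding twalk_def by blast
qed

lemma adj_twalk:
  assumes a: "adj r E x y" shows "twalk r E r x y"
proof -
  have x: "x \<in> oedges r E" and y: "y \<in> oedges r E" and c: "card {i. i < r \<and> x ! i \<noteq> y ! i} = 1"
    using a by (auto simp: adj_def)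
  obtain p where p: "{i. i < r \<and> x ! i \<noteq> y ! i} = {p}" using c card_1_singletonE by blast
  have pr: "p < r" using p by auto
  have eq: "x ! i = y ! i" if "i < r" "i \<noteq> p" for i using p that by auto
  have r0: "0 < r" using pr by simp
  define f where "f t = (if t < r then x ! t else y ! (t - r))" for t
  have modr: "(t + j) mod r = (if t + j < r then t + j else t + j - r)" if "t \<le> r" "j < r" for t j
    using that by (simp add: mod_if)
  have wx: "win r f t = rotn r t x" if "t \<le> p" for t
  proof (intro nth_equalityI)
    fix j assume "j < length (win r f t)"
    then have j: "j < r" by simp
    show "win r f t ! j = rotn r t x ! j"
      using j that pr eq[of "t + j - r"] by (auto simp: win_nth rotn_nth f_def modr)
  qed simp
  have wy: "win r f t = rotn r t y" if "p < t" "t \<le> r" for t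
  proof (intro nth_equalityI)
    fix j assume "j < length (win r f t)"
    then have j: "j < r" by simp
    show "win r f t ! j = rotn r t y ! j"
      using j that pr eq[of "t + j"] by (auto simp: win_nth rotn_nth f_def modr)
  qed simp
  have "\<forall>i\<le>r. win r f i \<in> oedges r E"
  proof (intro allI impI)
    fix i assume "i \<le> r"
    show "win r f i \<in> oedges r E"
    proof (cases "i \<le> p")
      case True then show ?thesis using wx rotn_oedges[OF r0 x] by simp
    next
      case False then show ?thesis using wy[of i] \<open>i \<le> r\<close> rotn_oedges[OF r0 y] by simp
    qed
  qed
  moreover have "win r f 0 = x" using wx[of 0] rotn_0[OF oedges_len[OF x]] by simp
  moreover have "win r f r = y"
    by (intro nth_equalityI) (auto simp: win_nth f_def oedges_len[OF y])
  ultimately show ?thesis unfolding twalk_def by blast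
qed

lemma eqv_twalk:
  assumes "(adj r E)\<^sup>*\<^sup>* x y" "x \<in> oedges r E"
  shows "\<exists>m. m mod r = 0 \<and> twalk r E m x y"
  using assms(1)
proof (induction rule: rtranclp_induct)
  case base then show ?case using twalk_refl[OF assms(2)] by (intro exI[of _ 0]) simp
next
  case (step y z)
  from step(3) obtain m where m: "m mod r = 0 \<and> twalk r E m x y" ..
  have "twalk r E r y z" using adj_twalk step(2) by blast
  then have "twalk r E (m + r) x z" using twalk_trans m by blast
  moreover have "(m + r) mod r = 0" using m by simp
  ultimately show ?case by (intro exI[of _ "m + r"] conjI)
qed

lemma twalk_cycle:
  assumes "twalk r E l x x" "r < l"
  shows "cycle_hom r E l (\<lambda>i. (SOME f. (\<forall>i\<le>l. win r f i \<in> oedges r E) \<and> win r f 0 = x \<and> win r f l = x) i)"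
proof -
  define f where "f = (SOME f. (\<forall>i\<le>l. win r f i \<in> oedges r E) \<and> win r f 0 = x \<and> win r f l = x)"
  have f: "(\<forall>i\<le>l. win r f i \<in> oedges r E) \<and> win r f 0 = x \<and> win r f l = x"
    unfolding f_def using assms(1) unfolding twalk_def by (rule someI_ex)
  have per: "f (l + j) = f j" if "j < r" for j
    using f that win_nth[of j r f 0] win_nth[of j r f l] by simp
  have w: "map (\<lambda>j. f ((i + j) mod l)) [0..<r] = win r f i" if "i < l" for i
  proof (intro nth_equalityI)
    fix j assume "j < length (map (\<lambda>j. f ((i + j) mod l)) [0..<r])"
    then have j: "j < r" by simp
    show "map (\<lambda>j. f ((i + j) mod l)) [0..<r] ! j = win r f i ! j"
    proof (cases "i + j < l")
      case True then show ?thesis using j by (simp add: win_nth)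
    next
      case False
      then have "(i + j) mod l = i + j - l" using j that assms(2) by (simp add: mod_if)
      moreover have "i + j - l < r" using j that by simp
      ultimately show ?thesis using j per[of "i + j - l"] False by (simp add: win_nth)
    qed
  qed simp
  show ?thesis unfolding f_def[symmetric] cycle_hom_def
    using w f by (simp add: oedges_def)
qed

lemma cycle_twalk:
  assumes "cycle_hom r E l phi" "0 < l"
  shows "\<exists>x. twalk r E l x x"
proof -
  define f where "f t = phi (t mod l)" for t
  have w: "win r f i = map (\<lambda>j. phi ((i mod l + j) mod l)) [0..<r]" for i
    by (intro nth_equalityI) (auto simp: win_nth f_def mod_add_left_eq)
  have "win r f i \<in> oedges r E" for i
    using assms w[of i] unfolding cycle_hom_def oedges_def by simp
  moreover have "win r f l = win r f 0"
    by (intro nth_equalityI) (auto simp: win_nth f_def)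
  ultimately show ?thesis unfolding twalk_def by metis
qed

lemma twalk_eqv:
  assumes "0 < r" "twalk r E m x y"
  shows "(adj r E)\<^sup>*\<^sup>* y (rotn r m x)"
proof -
  obtain f where f: "\<forall>i\<le>m. win r f i \<in> oedges r E" "win r f 0 = x" "win r f m = y"
    using assms(2) by (auto simp: twalk_def)
  have lx: "length x = r" using f(2) by (metis win_len)
  have "i \<le> m \<longrightarrow> (adj r E)\<^sup>*\<^sup>* (win r f i) (rotn r i x)" for i
  proof (induction i)
    case 0 then show ?case using f rotn_0[OF lx] by simp
  next
    case (Suc i)
    show ?case
    proof
      assume im: "Suc i \<le> m"
      then have ih: "(adj r E)\<^sup>*\<^sup>* (win r f i) (rotn r i x)" using Suc by simp
      let ?u = "win r f (Suc i)" and ?v = "rotn r 1 (win r f i)"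
      have uO: "?u \<in> oedges r E" using f im by simp
      have "win r f i \<in> oedges r E" using f im by simp
      then have vO: "?v \<in> oedges r E" using rotn_oedges[OF assms(1)] by blast
      have sub: "{j. j < r \<and> ?u ! j \<noteq> ?v ! j} \<subseteq> {r - 1}"
      proof
        fix j assume "j \<in> {j. j < r \<and> ?u ! j \<noteq> ?v ! j}"
        then have j: "j < r" "?u ! j \<noteq> ?v ! j" by auto
        show "j \<in> {r - 1}"
        proof (rule ccontr)
          assume "j \<notin> {r - 1}"
          then have "Suc j < r" using j by auto
          then have "?u ! j = ?v ! j" using j by (simp add: win_nth rotn_nth)
          then show False using j by simp
        qed
      qed
      have uv: "(adj r E)\<^sup>*\<^sup>* ?u ?v"
      proof (cases "card {j. j < r \<and> ?u ! j \<noteq> ?v ! j} = 1")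
        case True then have "adj r E ?u ?v" using uO vO by (simp add: adj_def)
        then show ?thesis by (rule r_into_rtranclp)
      next
        case False
        have "card {j. j < r \<and> ?u ! j \<noteq> ?v ! j} \<le> 1"
          using card_mono[OF _ sub] by simp
        then have c0: "card {j. j < r \<and> ?u ! j \<noteq> ?v ! j} = 0" using False by linarith
        have fin: "finite {j. j < r \<and> ?u ! j \<noteq> ?v ! j}"
          by (rule finite_subset[of _ "{..<r}"]) auto
        have "{j. j < r \<and> ?u ! j \<noteq> ?v ! j} = {}" using c0 fin by (simp only: card_0_eq)
        then have "?u = ?v" by (intro nth_equalityI) auto
        then show ?thesis by simp
      qed
      have "(adj r E)\<^sup>*\<^sup>* ?v (rotn r 1 (rotn r i x))"
        using reidx_eqv[OF rot_bij[OF assms(1)] ih] unfolding rotn_def .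
      also have "rotn r 1 (rotn r i x) = rotn r (Suc i) x" using rotn_rotn[OF assms(1), of 1 i x] by simp
      finally have vv: "(adj r E)\<^sup>*\<^sup>* ?v (rotn r (Suc i) x)" .
      show "(adj r E)\<^sup>*\<^sup>* ?u (rotn r (Suc i) x)" by (rule rtranclp_trans[OF uv vv])
    qed
  qed
  then have "(adj r E)\<^sup>*\<^sup>* (win r f m) (rotn r m x)" by blast
  then show ?thesis using f(3) by simp
qed


lemma cyc_permutes: assumes r0: "0 < r" shows "cyc r permutes {1..r}"
proof -
  have inj: "inj_on (cyc r) {1..r}" by (auto simp: inj_on_def cyc_def split: if_splits)
  have img: "cyc r ` {1..r} \<subseteq> {1..r}"
  proof
    fix y assume "y \<in> cyc r ` {1..r}"
    then obtain i where "i \<in> {1..r}" "y = cyc r i" by auto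
    then show "y \<in> {1..r}" by (auto simp: cyc_def)
  qed
  have "cyc r ` {1..r} = {1..r}" using endo_inj_surj[OF finite_atLeastAtMost img inj] .
  then have "bij_betw (cyc r) {1..r} {1..r}" using inj by (simp add: bij_betw_def)
  then show ?thesis by (rule bij_imp_permutes) (use r0 in \<open>auto simp: cyc_def\<close>)
qed

lemma pi_permutes: assumes r0: "0 < r" shows "(cyc r ^^ k) permutes {1..r}"
proof (induction k)
  case 0 show ?case unfolding funpow.simps(1) by (rule permutes_id)
next
  case (Suc k) show ?case unfolding funpow.simps(2) by (rule permutes_compose[OF Suc.IH cyc_permutes[OF r0]])
qed

lemma pi_val:
  assumes "j < r" shows "(cyc r ^^ k) (Suc j) = Suc ((j + k) mod r)"
proof (induction k)
  case 0 then show ?case using assms by simp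
next
  case (Suc k)
  have lt: "(j + k) mod r < r" using assms by simp
  show ?case
  proof (cases "Suc ((j + k) mod r) = r")
    case True
    then have "(j + Suc k) mod r = 0" by (simp add: mod_Suc)
    then show ?thesis using Suc True by (simp add: cyc_def)
  next
    case False
    then have "(j + Suc k) mod r = Suc ((j + k) mod r)" by (simp add: mod_Suc)
    then show ?thesis using Suc False lt by (simp add: cyc_def)
  qed
qed

lemma rot_pi:
  assumes "0 < r" "length x = r"
  shows "rotn r (k mod r) (tuple_act r (cyc r ^^ k) x) = x"
proof (rule nth_equalityI)
  show "length (rotn r (k mod r) (tuple_act r (cyc r ^^ k) x)) = length x" using assms by simp
  fix j assume "j < length (rotn r (k mod r) (tuple_act r (cyc r ^^ k) x))"
  then have j: "j < r" by simp
  have p: "(cyc r ^^ k) permutes {1..r}" by (rule pi_permutes[OF assms(1)])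
  have i: "(k mod r + j) mod r < r" using assms by simp
  have "(j + k) mod r = (k mod r + j) mod r" by (metis add.commute mod_add_left_eq)
  then have "(cyc r ^^ k) (Suc j) = Suc ((k mod r + j) mod r)" using pi_val[OF j] by simp
  then have iv: "inv' (cyc r ^^ k) (Suc ((k mod r + j) mod r)) = Suc j"
    using permutes_inverses(2)[OF p] by metis
  have "rotn r (k mod r) (tuple_act r (cyc r ^^ k) x) ! j
      = tuple_act r (cyc r ^^ k) x ! ((k mod r + j) mod r)" using j by (simp add: rotn_nth)
  also have "\<dots> = x ! (inv' (cyc r ^^ k) (Suc ((k mod r + j) mod r)) - 1)"
    using i by (simp add: tuple_act_def)
  also have "\<dots> = x ! j" using iv by simp
  finally show "rotn r (k mod r) (tuple_act r (cyc r ^^ k) x) ! j = x ! j" .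
qed

lemma pi_rot:
  assumes "0 < r" "length x = r"
  shows "tuple_act r (cyc r ^^ k) (rotn r (k mod r) x) = x"
proof (rule nth_equalityI)
  show "length (tuple_act r (cyc r ^^ k) (rotn r (k mod r) x)) = length x"
    using assms by (simp add: tuple_act_def)
  fix j assume "j < length (tuple_act r (cyc r ^^ k) (rotn r (k mod r) x))"
  then have j: "j < r" by (simp add: tuple_act_def)
  have p: "(cyc r ^^ k) permutes {1..r}" by (rule pi_permutes[OF assms(1)])
  define i where "i = inv' (cyc r ^^ k) (Suc j) - 1"
  have "inv' (cyc r ^^ k) (Suc j) \<in> {1..r}"
    using permutes_in_image[OF permutes_inv[OF p], of "Suc j"] j by auto
  then have i: "i < r" "Suc i = inv' (cyc r ^^ k) (Suc j)" by (auto simp: i_def)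
  have "(cyc r ^^ k) (Suc i) = Suc j" using i(2) permutes_inverses(1)[OF p] by metis
  then have "Suc ((i + k) mod r) = Suc j" using pi_val[OF i(1)] by simp
  then have "(i + k) mod r = j" by simp
  then have ij: "(k mod r + i) mod r = j" by (metis add.commute mod_add_left_eq)
  have "tuple_act r (cyc r ^^ k) (rotn r (k mod r) x) ! j = rotn r (k mod r) x ! i"
    using j by (simp add: tuple_act_def i_def)
  also have "\<dots> = x ! j" using i(1) ij by (simp add: rotn_nth)
  finally show "tuple_act r (cyc r ^^ k) (rotn r (k mod r) x) ! j = x ! j" .
qed

lemma act_oedges:
  assumes "s permutes {1..r}" "x \<in> oedges r E" shows "tuple_act r s x \<in> oedges r E"
  using reidx_oedges[OF act_bij[OF assms(1)] assms(2)] by (simp add: act_reidx)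

lemma act_eqv:
  assumes "s permutes {1..r}" "(adj r E)\<^sup>*\<^sup>* x y"
  shows "(adj r E)\<^sup>*\<^sup>* (tuple_act r s x) (tuple_act r s y)"
  using reidx_eqv[OF act_bij[OF assms(1)] assms(2)] by (simp add: act_reidx)

lemma nohom:
  assumes r: "0 < r" and z: "z \<in> oedges r E"
    and e: "(adj r E)\<^sup>*\<^sup>* (tuple_act r (cyc r ^^ k) z) z"
  shows "\<not> hom_free r k E"
proof -
  have pz: "tuple_act r (cyc r ^^ k) z \<in> oedges r E" using act_oedges[OF pi_permutes[OF r] z] .
  from eqv_twalk[OF eqv_sym[OF e] z] obtain m where
    mm: "m mod r = 0 \<and> twalk r E m z (tuple_act r (cyc r ^^ k) z)" ..
  have m: "m mod r = 0" "twalk r E m z (tuple_act r (cyc r ^^ k) z)" using mm by simp_all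
  have w2: "twalk r E (k mod r) (tuple_act r (cyc r ^^ k) z) z"
    using twalk_rot[OF r pz, of "k mod r"] rot_pi[OF r oedges_len[OF z]] by simp
  have rr: "rotn r r z = z" by (intro nth_equalityI) (auto simp: rotn_nth oedges_len[OF z])
  have w3: "twalk r E r z z" using twalk_rot[OF r z, of r] rr by simp
  have tw: "twalk r E (m + k mod r + r + r) z z"
    using twalk_trans[OF twalk_trans[OF twalk_trans[OF m(2) w2] w3] w3] .
  have lt: "r < m + k mod r + r + r" using r by simp
  have "r dvd m" using m(1) by (simp add: dvd_eq_mod_eq_0)
  then obtain q where q: "m = r * q" by (auto elim: dvdE)
  have "m + k mod r + r + r = k mod r + r * (q + 2)" using q by (simp add: algebra_simps)
  then have md: "(m + k mod r + r + r) mod r = k mod r" by simp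
  show ?thesis unfolding hom_free_def using twalk_cycle[OF tw lt] lt md by blast
qed

definition Gam :: "nat \<Rightarrow> 'a set set \<Rightarrow> 'a list \<Rightarrow> perm set" where
  "Gam r E x = {s \<in> carrier (sym_group r). (adj r E)\<^sup>*\<^sup>* (tuple_act r s x) x}"

lemma Gam_subgroup:
  assumes xO: "x \<in> oedges r E" shows "subgroup (Gam r E x) (sym_group r)"
proof (rule group.subgroupI[OF sym_group_is_group])
  show "Gam r E x \<subseteq> carrier (sym_group r)" by (auto simp: Gam_def)
  have "id \<in> Gam r E x" using act_id[OF oedges_len[OF xO]]
    by (simp add: Gam_def sym_group_carrier)
  then show "Gam r E x \<noteq> {}" by blast
next
  fix a assume a: "a \<in> Gam r E x"
  then have ac: "a \<in> carrier (sym_group r)" and e: "(adj r E)\<^sup>*\<^sup>* (tuple_act r a x) x"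
    by (auto simp: Gam_def)
  have ap: "a permutes {1..r}" using ac by (simp add: sym_group_carrier)
  have ip: "inv' a permutes {1..r}" using permutes_inv[OF ap] .
  have e2: "(adj r E)\<^sup>*\<^sup>* (tuple_act r (inv' a) (tuple_act r a x)) (tuple_act r (inv' a) x)"
    using act_eqv[OF ip e] .
  have "tuple_act r (inv' a) (tuple_act r a x) = tuple_act r (inv' a \<circ> a) x"
    by (rule act_comp[OF ip ap])
  also have "\<dots> = tuple_act r id x" by (simp only: permutes_inv_o(2)[OF ap])
  also have "\<dots> = x" by (rule act_id[OF oedges_len[OF xO]])
  finally have "tuple_act r (inv' a) (tuple_act r a x) = x" .
  then have "(adj r E)\<^sup>*\<^sup>* (tuple_act r (inv' a) x) x" using eqv_sym e2 by metis
  then show "inv\<^bsub>sym_group r\<^esub> a \<in> Gam r E x"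
    using ip by (simp add: Gam_def sym_group_carrier sym_group_inv_equality[OF ac])
next
  fix a b assume a: "a \<in> Gam r E x" and b: "b \<in> Gam r E x"
  then have ap: "a permutes {1..r}" and bp: "b permutes {1..r}"
    and ea: "(adj r E)\<^sup>*\<^sup>* (tuple_act r a x) x" and eb: "(adj r E)\<^sup>*\<^sup>* (tuple_act r b x) x"
    by (auto simp: Gam_def sym_group_carrier)
  have "(adj r E)\<^sup>*\<^sup>* (tuple_act r a (tuple_act r b x)) (tuple_act r a x)"
    using act_eqv[OF ap eb] .
  then have "(adj r E)\<^sup>*\<^sup>* (tuple_act r (a \<circ> b) x) x"
    using act_comp[OF ap bp, of x] rtranclp_trans[OF _ ea] by metis
  then show "a \<otimes>\<^bsub>sym_group r\<^esub> b \<in> Gam r E x"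
    using permutes_compose[OF bp ap] by (simp add: Gam_def sym_group_carrier sym_group_mult)
qed

lemma Gam_avoids:
  assumes hf: "hom_free r k E" and r: "0 < r" and xO: "x \<in> oedges r E"
  shows "avoids r (cyc r ^^ k) (Gam r E x)"
  unfolding avoids_def
proof (intro ballI notI)
  fix g assume g: "g \<in> carrier (sym_group r)"
    and mem: "g \<otimes>\<^bsub>sym_group r\<^esub> (cyc r ^^ k) \<otimes>\<^bsub>sym_group r\<^esub> inv\<^bsub>sym_group r\<^esub> g \<in> Gam r E x"
  let ?p = "cyc r ^^ k"
  have gp: "g permutes {1..r}" using g by (simp add: sym_group_carrier)
  have ig: "inv' g permutes {1..r}" using permutes_inv[OF gp] .
  have pp: "?p permutes {1..r}" by (rule pi_permutes[OF r])
  have cp: "g \<circ> ?p \<circ> inv' g permutes {1..r}"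
    using permutes_compose[OF ig permutes_compose[OF pp gp]] by (simp add: o_assoc)
  have e: "(adj r E)\<^sup>*\<^sup>* (tuple_act r (g \<circ> ?p \<circ> inv' g) x) x"
    using mem g by (simp add: Gam_def sym_group_mult sym_group_inv_equality[OF g])
  define z where "z = tuple_act r (inv' g) x"
  have zO: "z \<in> oedges r E" unfolding z_def using act_oedges[OF ig xO] .
  have e2: "(adj r E)\<^sup>*\<^sup>* (tuple_act r (inv' g) (tuple_act r (g \<circ> ?p \<circ> inv' g) x)) z"
    unfolding z_def using act_eqv[OF ig e] .
  have fe: "inv' g \<circ> (g \<circ> ?p \<circ> inv' g) = ?p \<circ> inv' g"
    by (simp add: fun_eq_iff permutes_inverses[OF gp])
  have "tuple_act r (inv' g) (tuple_act r (g \<circ> ?p \<circ> inv' g) x) = tuple_act r (?p \<circ> inv' g) x"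
    using act_comp[OF ig cp, of x] fe by simp
  also have "\<dots> = tuple_act r ?p z" unfolding z_def by (rule act_comp[OF pp ig, symmetric])
  finally have "(adj r E)\<^sup>*\<^sup>* (tuple_act r ?p z) z" using e2 by simp
  then have "\<not> hom_free r k E" using nohom[OF r zO] by blast
  then show False using hf by simp
qed

lemma max_ext:
  assumes "subgroup K (sym_group r)" "avoids r p K"
  shows "\<exists>H. max_avoiding r p H \<and> K \<subseteq> H"
proof -
  define C where "C = {H. subgroup H (sym_group r) \<and> avoids r p H \<and> K \<subseteq> H}"
  have finS: "finite (carrier (sym_group r))" by (simp add: sym_group_def finite_permutations)
  have sub: "C \<subseteq> Pow (carrier (sym_group r))" by (auto simp: C_def dest: subgroup.subset)
  have finC: "finite C" using finite_subset[OF sub] finS by simp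
  have KC: "K \<in> C" using assms by (simp add: C_def)
  have "Max (card ` C) \<in> card ` C" using finC KC by (intro Max_in) auto
  then obtain H where H: "H \<in> C" "card H = Max (card ` C)" by auto
  have "max_avoiding r p H"
    unfolding max_avoiding_def
  proof (intro conjI allI impI)
    show "subgroup H (sym_group r)" "avoids r p H" using H(1) by (auto simp: C_def)
    fix H' assume h': "subgroup H' (sym_group r) \<and> avoids r p H' \<and> H \<subseteq> H'"
    then have "H' \<in> C" using H(1) by (auto simp: C_def)
    then have c1: "card H' \<le> card H" using H(2) finC by simp
    have finH': "finite H'" using h' finS finite_subset subgroup.subset by metis
    have c2: "card H \<le> card H'" using card_mono[OF finH'] h' by simp
    have "card H = card H'" using c1 c2 by simp
    then show "H' = H" using card_subset_eq[OF finH'] h' by metis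
  qed
  then show ?thesis using H(1) by (auto simp: C_def)
qed

lemma lcos_img: "g <#\<^bsub>sym_group r\<^esub> G = (\<lambda>h. g \<circ> h) ` G"
  by (auto simp: l_coset_def sym_group_mult)

lemma rcos_img: "G #>\<^bsub>sym_group r\<^esub> g = (\<lambda>h. h \<circ> g) ` G"
  by (auto simp: r_coset_def sym_group_mult)

lemma coset_wd:
  assumes G: "subgroup G (sym_group r)" and g: "g \<in> carrier (sym_group r)"
    and s: "s \<in> carrier (sym_group r)" and t: "t \<in> carrier (sym_group r)"
    and m: "inv' t \<circ> s \<in> (g <#\<^bsub>sym_group r\<^esub> G) #>\<^bsub>sym_group r\<^esub> inv\<^bsub>sym_group r\<^esub> g"
  shows "(s \<circ> g) <#\<^bsub>sym_group r\<^esub> G = (t \<circ> g) <#\<^bsub>sym_group r\<^esub> G"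
proof -
  have gp: "g permutes {1..r}" using g by (simp add: sym_group_carrier)
  have tp: "t permutes {1..r}" using t by (simp add: sym_group_carrier)
  have sp: "s permutes {1..r}" using s by (simp add: sym_group_carrier)
  obtain c where c: "c \<in> G" "inv' t \<circ> s = g \<circ> c \<circ> inv' g"
    using m by (auto simp: lcos_img rcos_img sym_group_inv_equality[OF g])
  have "s \<circ> g = t \<circ> g \<circ> c"
  proof
    fix y
    have "s (g y) = t (inv' t (s (g y)))" using permutes_inverses(1)[OF tp] by metis
    also have "inv' t (s (g y)) = g (c (inv' g (g y)))" using fun_cong[OF c(2), of "g y"] by simp
    also have "inv' g (g y) = y" using permutes_inverses(2)[OF gp] by metis
    finally show "(s \<circ> g) y = (t \<circ> g \<circ> c) y" by simp
  qed
  then have "s \<circ> g \<in> (t \<circ> g) <#\<^bsub>sym_group r\<^esub> G" using c(1) by (auto simp: lcos_img)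
  moreover have "t \<circ> g \<in> carrier (sym_group r)"
    using permutes_compose[OF gp tp] by (simp add: sym_group_carrier)
  ultimately show ?thesis
    using group.l_repr_independence[OF sym_group_is_group _ _ G] by metis
qed


lemma eqv_const:
  assumes acc: "accordant r E chi" and e: "(adj r E)\<^sup>*\<^sup>* u v"
  shows "chi u = chi v"
  using e
proof (induction rule: rtranclp_induct)
  case base then show ?case by simp
next
  case (step y z)
  then show ?case using acc unfolding accordant_def adj_def by metis
qed

theorem theorem3p4:
  fixes r k :: nat and E :: "'a set set" and R :: "perm set set"
  assumes "r \<ge> 2"
    and "finite E"
    and "\<forall>e \<in> E. card e = r"
    and "rep_system r (cyc r ^^ k) R"
  shows "hom_free r k E \<longleftrightarrow> (\<exists>chi. A_coloring r R E chi \<and> accordant r E chi)"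
proof -
  let ?p = "cyc r ^^ k"
  let ?S = "sym_group r"
  have r0: "0 < r" using assms(1) by simp
  have pp: "?p permutes {1..r}" by (rule pi_permutes[OF r0])
  have pS: "?p \<in> carrier ?S" using pp by (simp add: sym_group_carrier)
  have RM: "\<And>G. G \<in> R \<Longrightarrow> max_avoiding r ?p G" using assms(4) unfolding rep_system_def by blast
  have Rex: "\<And>H. max_avoiding r ?p H \<Longrightarrow> \<exists>G. G \<in> R \<and> conj_subgroups r G H"
    using assms(4) unfolding rep_system_def by blast
  show ?thesis
  proof
    assume hf: "hom_free r k E"
    define cls where "cls y = {x \<in> oedges r E. \<exists>s \<in> carrier ?S. (adj r E)\<^sup>*\<^sup>* (tuple_act r s x) y}" for y
    define rep where "rep y = (SOME x. x \<in> cls y)" for y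
    define Hx where "Hx x = (SOME H. max_avoiding r ?p H \<and> Gam r E x \<subseteq> H)" for x
    define Gx where "Gx x = (SOME G. G \<in> R \<and> conj_subgroups r G (Hx x))" for x
    define gx where "gx x = (SOME g. g \<in> carrier ?S \<and> Hx x = (g <#\<^bsub>?S\<^esub> Gx x) #>\<^bsub>?S\<^esub> inv\<^bsub>?S\<^esub> g)" for x
    define sx where "sx y = (SOME s. s \<in> carrier ?S \<and> (adj r E)\<^sup>*\<^sup>* (tuple_act r s (rep y)) y)" for y
    define chi where "chi y = (Gx (rep y), (sx y \<circ> gx (rep y)) <#\<^bsub>?S\<^esub> Gx (rep y))" for y
    have F1: "max_avoiding r ?p (Hx x) \<and> Gam r E x \<subseteq> Hx x" if "x \<in> oedges r E" for x
    proof -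
      have "\<exists>H. max_avoiding r ?p H \<and> Gam r E x \<subseteq> H"
        using max_ext[OF Gam_subgroup[OF that] Gam_avoids[OF hf r0 that]] .
      then show ?thesis unfolding Hx_def by (rule someI_ex)
    qed
    have F2: "Gx x \<in> R \<and> conj_subgroups r (Gx x) (Hx x)" if "x \<in> oedges r E" for x
    proof -
      have "\<exists>G. G \<in> R \<and> conj_subgroups r G (Hx x)" using Rex F1[OF that] by blast
      then show ?thesis unfolding Gx_def by (rule someI_ex)
    qed
    have F3: "gx x \<in> carrier ?S \<and> Hx x = (gx x <#\<^bsub>?S\<^esub> Gx x) #>\<^bsub>?S\<^esub> inv\<^bsub>?S\<^esub> (gx x)"
      if "x \<in> oedges r E" for x
    proof -
      have "\<exists>g. g \<in> carrier ?S \<and> Hx x = (g <#\<^bsub>?S\<^esub> Gx x) #>\<^bsub>?S\<^esub> inv\<^bsub>?S\<^esub> g"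
        using F2[OF that] unfolding conj_subgroups_def by blast
      then show ?thesis unfolding gx_def by (rule someI_ex)
    qed
    have F4: "subgroup (Gx x) ?S" if "x \<in> oedges r E" for x
      using RM F2[OF that] unfolding max_avoiding_def by blast
    have WD: "(s \<circ> gx x) <#\<^bsub>?S\<^esub> Gx x = (t \<circ> gx x) <#\<^bsub>?S\<^esub> Gx x"
      if x: "x \<in> oedges r E" and s: "s \<in> carrier ?S" and t: "t \<in> carrier ?S"
        and es: "(adj r E)\<^sup>*\<^sup>* (tuple_act r s x) y" and et: "(adj r E)\<^sup>*\<^sup>* (tuple_act r t x) y"
      for x s t y
    proof -
      have sp: "s permutes {1..r}" and tp: "t permutes {1..r}" using s t by (simp_all add: sym_group_carrier)
      have itp: "inv' t permutes {1..r}" using permutes_inv[OF tp] .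
      have "(adj r E)\<^sup>*\<^sup>* (tuple_act r s x) (tuple_act r t x)"
        using rtranclp_trans[OF es eqv_sym[OF et]] .
      then have "(adj r E)\<^sup>*\<^sup>* (tuple_act r (inv' t) (tuple_act r s x)) (tuple_act r (inv' t) (tuple_act r t x))"
        by (rule act_eqv[OF itp])
      moreover have "tuple_act r (inv' t) (tuple_act r s x) = tuple_act r (inv' t \<circ> s) x"
        by (rule act_comp[OF itp sp])
      moreover have "tuple_act r (inv' t) (tuple_act r t x) = tuple_act r (inv' t \<circ> t) x"
        by (rule act_comp[OF itp tp])
      moreover have "tuple_act r (inv' t \<circ> t) x = x"
        using act_id[OF oedges_len[OF x]] by (simp only: permutes_inv_o(2)[OF tp])
      ultimately have "(adj r E)\<^sup>*\<^sup>* (tuple_act r (inv' t \<circ> s) x) x" by simp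
      moreover have "inv' t \<circ> s \<in> carrier ?S"
        using permutes_compose[OF sp itp] by (simp add: sym_group_carrier)
      ultimately have "inv' t \<circ> s \<in> Gam r E x" by (simp add: Gam_def)
      then have "inv' t \<circ> s \<in> (gx x <#\<^bsub>?S\<^esub> Gx x) #>\<^bsub>?S\<^esub> inv\<^bsub>?S\<^esub> (gx x)"
        using F1[OF x] F3[OF x] by auto
      then show ?thesis using coset_wd[OF F4[OF x] conjunct1[OF F3[OF x]] s t] by blast
    qed
    have C1: "y \<in> cls y" if "y \<in> oedges r E" for y
    proof -
      have "id \<in> carrier ?S" by (simp add: sym_group_carrier)
      moreover have "tuple_act r id y = y" using act_id[OF oedges_len[OF that]] .
      ultimately have i: "id \<in> carrier ?S" and e: "(adj r E)\<^sup>*\<^sup>* (tuple_act r id y) y" by simp_all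
      have "\<exists>s \<in> carrier ?S. (adj r E)\<^sup>*\<^sup>* (tuple_act r s y) y" by (rule bexI[where x=id and P="\<lambda>s. (adj r E)\<^sup>*\<^sup>* (tuple_act r s y) y", OF e i])
      then show ?thesis unfolding cls_def mem_Collect_eq using that by (rule conjI[rotated])
    qed
    have C2: "rep y \<in> oedges r E \<and> sx y \<in> carrier ?S \<and> (adj r E)\<^sup>*\<^sup>* (tuple_act r (sx y) (rep y)) y"
      if "y \<in> oedges r E" for y
    proof -
      have "rep y \<in> cls y" unfolding rep_def using C1[OF that] by (rule someI)
      then have A: "rep y \<in> oedges r E" and B: "\<exists>s. s \<in> carrier ?S \<and> (adj r E)\<^sup>*\<^sup>* (tuple_act r s (rep y)) y"
        unfolding cls_def by auto
      have "sx y \<in> carrier ?S \<and> (adj r E)\<^sup>*\<^sup>* (tuple_act r (sx y) (rep y)) y"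
        using B unfolding sx_def by (rule someI_ex)
      then show ?thesis using A by simp
    qed
    have C3: "cls (tuple_act r q y) = cls y" if y: "y \<in> oedges r E" and q: "q \<in> carrier ?S" for y q
    proof -
      have qp: "q permutes {1..r}" using q by (simp add: sym_group_carrier)
      have iqp: "inv' q permutes {1..r}" using permutes_inv[OF qp] .
      have bk: "tuple_act r (inv' q) (tuple_act r q y) = y"
        using act_comp[OF iqp qp, of y] act_id[OF oedges_len[OF y]] by (simp add: permutes_inv_o(2)[OF qp])
      show ?thesis
      proof
        show "cls (tuple_act r q y) \<subseteq> cls y"
        proof
          fix x assume "x \<in> cls (tuple_act r q y)"
          then obtain s where x: "x \<in> oedges r E" and s: "s \<in> carrier ?S"
            and e: "(adj r E)\<^sup>*\<^sup>* (tuple_act r s x) (tuple_act r q y)" unfolding cls_def by auto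
          have sp: "s permutes {1..r}" using s by (simp add: sym_group_carrier)
          have "(adj r E)\<^sup>*\<^sup>* (tuple_act r (inv' q) (tuple_act r s x)) (tuple_act r (inv' q) (tuple_act r q y))"
            by (rule act_eqv[OF iqp e])
          then have "(adj r E)\<^sup>*\<^sup>* (tuple_act r (inv' q \<circ> s) x) y"
            using bk act_comp[OF iqp sp, of x] by simp
          moreover have "inv' q \<circ> s \<in> carrier ?S"
            using permutes_compose[OF sp iqp] by (simp add: sym_group_carrier)
          ultimately show "x \<in> cls y" using x unfolding cls_def by blast
        qed
        show "cls y \<subseteq> cls (tuple_act r q y)"
        proof
          fix x assume "x \<in> cls y"
          then obtain s where x: "x \<in> oedges r E" and s: "s \<in> carrier ?S"
            and e: "(adj r E)\<^sup>*\<^sup>* (tuple_act r s x) y" unfolding cls_def by auto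
          have sp: "s permutes {1..r}" using s by (simp add: sym_group_carrier)
          have "(adj r E)\<^sup>*\<^sup>* (tuple_act r q (tuple_act r s x)) (tuple_act r q y)"
            by (rule act_eqv[OF qp e])
          then have "(adj r E)\<^sup>*\<^sup>* (tuple_act r (q \<circ> s) x) (tuple_act r q y)"
            using act_comp[OF qp sp, of x] by simp
          moreover have "q \<circ> s \<in> carrier ?S"
            using permutes_compose[OF sp qp] by (simp add: sym_group_carrier)
          ultimately show "x \<in> cls (tuple_act r q y)" using x unfolding cls_def by blast
        qed
      qed
    qed
    have C4: "cls y' = cls y" if a: "adj r E y y'" for y y'
    proof -
      have e: "(adj r E)\<^sup>*\<^sup>* y y'" using a by (rule r_into_rtranclp)
      show ?thesis unfolding cls_def
        using rtranclp_trans[OF _ e] rtranclp_trans[OF _ eqv_sym[OF e]] by blast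
    qed
    have col: "A_coloring r R E chi"
      unfolding A_coloring_def
    proof (intro conjI ballI)
      fix y assume y: "y \<in> oedges r E"
      have x: "rep y \<in> oedges r E" and s: "sx y \<in> carrier ?S" using C2[OF y] by auto
      have "sx y \<circ> gx (rep y) \<in> carrier ?S"
        using s conjunct1[OF F3[OF x]] permutes_compose by (simp add: sym_group_carrier)
      then show "chi y \<in> A_set r R" using F2[OF x] unfolding chi_def A_set_def by blast
    next
      fix q y assume q: "q \<in> carrier ?S" and y: "y \<in> oedges r E"
      have qp: "q permutes {1..r}" using q by (simp add: sym_group_carrier)
      have qy: "tuple_act r q y \<in> oedges r E" using act_oedges[OF qp y] .
      have rr: "rep (tuple_act r q y) = rep y" unfolding rep_def using C3[OF y q] by simp
      have x: "rep y \<in> oedges r E" and s: "sx y \<in> carrier ?S"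
        and e: "(adj r E)\<^sup>*\<^sup>* (tuple_act r (sx y) (rep y)) y" using C2[OF y] by auto
      have s2: "sx (tuple_act r q y) \<in> carrier ?S"
        and e2: "(adj r E)\<^sup>*\<^sup>* (tuple_act r (sx (tuple_act r q y)) (rep y)) (tuple_act r q y)"
        using C2[OF qy] rr by auto
      have sp: "sx y permutes {1..r}" using s by (simp add: sym_group_carrier)
      have qs: "q \<circ> sx y \<in> carrier ?S" using permutes_compose[OF sp qp] by (simp add: sym_group_carrier)
      have "(adj r E)\<^sup>*\<^sup>* (tuple_act r q (tuple_act r (sx y) (rep y))) (tuple_act r q y)"
        by (rule act_eqv[OF qp e])
      then have e3: "(adj r E)\<^sup>*\<^sup>* (tuple_act r (q \<circ> sx y) (rep y)) (tuple_act r q y)"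
        using act_comp[OF qp sp, of "rep y"] by simp
      have "chi (tuple_act r q y) = (Gx (rep y), (sx (tuple_act r q y) \<circ> gx (rep y)) <#\<^bsub>?S\<^esub> Gx (rep y))"
        unfolding chi_def rr ..
      also have "\<dots> = (Gx (rep y), (q \<circ> sx y \<circ> gx (rep y)) <#\<^bsub>?S\<^esub> Gx (rep y))"
        using WD[OF x s2 qs e2 e3] by simp
      also have "\<dots> = A_act r q (chi y)"
        unfolding chi_def A_act_def by (simp add: lcos_img image_image o_assoc)
      finally show "chi (tuple_act r q y) = A_act r q (chi y)" .
    qed
    have acc: "accordant r E chi"
      unfolding accordant_def
    proof (intro ballI impI)
      fix y y' assume y: "y \<in> oedges r E" and y': "y' \<in> oedges r E"
        and c: "card {i. i < r \<and> y ! i \<noteq> y' ! i} = 1"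
      have a: "adj r E y y'" using y y' c by (simp add: adj_def)
      have rr: "rep y' = rep y" unfolding rep_def using C4[OF a] by simp
      have x: "rep y \<in> oedges r E" and s: "sx y \<in> carrier ?S"
        and e: "(adj r E)\<^sup>*\<^sup>* (tuple_act r (sx y) (rep y)) y" using C2[OF y] by auto
      have s2: "sx y' \<in> carrier ?S"
        and e2: "(adj r E)\<^sup>*\<^sup>* (tuple_act r (sx y') (rep y)) y'"
        using C2[OF y'] rr by auto
      have e3: "(adj r E)\<^sup>*\<^sup>* (tuple_act r (sx y) (rep y)) y'"
        using rtranclp.rtrancl_into_rtrancl[OF e a] .
      show "chi y = chi y'"
        unfolding chi_def rr using WD[OF x s s2 e3 e2] by simp
    qed
    show "\<exists>chi. A_coloring r R E chi \<and> accordant r E chi" using col acc by blast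
  next
    assume "\<exists>chi. A_coloring r R E chi \<and> accordant r E chi"
    then obtain chi where col: "A_coloring r R E chi" and acc: "accordant r E chi" by blast
    show "hom_free r k E"
    proof (rule ccontr)
      assume "\<not> hom_free r k E"
      then obtain l phi where l: "r < l" "l mod r = k mod r" "cycle_hom r E l phi"
        unfolding hom_free_def by blast
      obtain x where tw: "twalk r E l x x" using cycle_twalk[OF l(3)] l(1) by auto
      have xO: "x \<in> oedges r E" using tw unfolding twalk_def by force
      have e1: "(adj r E)\<^sup>*\<^sup>* x (rotn r l x)" using twalk_eqv[OF r0 tw] .
      have rl: "rotn r l x = rotn r (k mod r) x"
      proof (intro nth_equalityI)
        fix j assume "j < length (rotn r l x)"
        then have j: "j < r" by simp
        have "(l + j) mod r = (k mod r + j) mod r" using l(2) by (metis mod_add_left_eq)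
        then show "rotn r l x ! j = rotn r (k mod r) x ! j" using j by (simp add: rotn_nth)
      qed simp
      define w where "w = rotn r (k mod r) x"
      have wO: "w \<in> oedges r E" unfolding w_def by (rule rotn_oedges[OF r0 xO])
      have pw: "tuple_act r ?p w = x" unfolding w_def using pi_rot[OF r0 oedges_len[OF xO]] .
      have exw: "(adj r E)\<^sup>*\<^sup>* x w" using e1 rl unfolding w_def by simp
      have "chi w = chi x" using eqv_const[OF acc exw] by simp
      also have "\<dots> = chi (tuple_act r ?p w)" using pw by simp
      also have "\<dots> = A_act r ?p (chi w)" using col pS wO unfolding A_coloring_def by blast
      finally have fxd: "chi w = A_act r ?p (chi w)" .
      have "chi w \<in> A_set r R" using col wO unfolding A_coloring_def by blast
      then obtain G g where G: "G \<in> R" and g: "g \<in> carrier ?S" and cw: "chi w = (G, g <#\<^bsub>?S\<^esub> G)"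
        unfolding A_set_def by auto
      have gp: "g permutes {1..r}" using g by (simp add: sym_group_carrier)
      have Gsub: "subgroup G ?S" and av: "avoids r ?p G" using RM[OF G] unfolding max_avoiding_def by auto
      have eqc: "?p <#\<^bsub>?S\<^esub> (g <#\<^bsub>?S\<^esub> G) = g <#\<^bsub>?S\<^esub> G"
        using fxd cw by (simp add: A_act_def)
      have "id \<in> G" using subgroup.one_closed[OF Gsub] by (simp add: sym_group_one)
      then have g1: "g \<in> (\<lambda>h. g \<circ> h) ` G" using imageI[of id G "\<lambda>h. g \<circ> h"] by simp
      have "?p \<circ> g \<in> (\<lambda>h. ?p \<circ> h) ` ((\<lambda>h. g \<circ> h) ` G)" using imageI[OF g1, of "\<lambda>h. ?p \<circ> h"] .
      then have "?p \<circ> g \<in> ?p <#\<^bsub>?S\<^esub> (g <#\<^bsub>?S\<^esub> G)" by (simp only: lcos_img)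
      then have "?p \<circ> g \<in> (\<lambda>h. g \<circ> h) ` G" using eqc by (simp add: lcos_img)
      then obtain c where c: "c \<in> G" "?p \<circ> g = g \<circ> c" by auto
      have "inv' g \<circ> ?p \<circ> g = c"
      proof
        fix y
        have "?p (g y) = g (c y)" using fun_cong[OF c(2), of y] by simp
        then show "(inv' g \<circ> ?p \<circ> g) y = c y" using permutes_inverses(2)[OF gp] by simp
      qed
      moreover have igS: "inv' g \<in> carrier ?S" using sym_group_inv_closed[OF g] .
      moreover have "inv\<^bsub>?S\<^esub> (inv' g) = g"
        using sym_group_inv_equality[OF igS] permutes_inv_inv[OF gp] by simp
      ultimately have "inv' g \<otimes>\<^bsub>?S\<^esub> ?p \<otimes>\<^bsub>?S\<^esub> inv\<^bsub>?S\<^esub> (inv' g) \<in> G"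
        using c(1) by (simp add: sym_group_mult)
      then show False using av igS unfolding avoids_def by blast
    qed
  qed
qed

end
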